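(* Let $n\ge2$, let $G$ be an absolutely continuous distribution function on $[0,\infty)$, $\lambda>0$, $\alpha_1,\dots,\alpha_n,\alpha^*_1,\dots,\alpha^*_n>0$. Let $\phi_1,\phi_2$ be Archimedean generators with pseudo-inverses $\psi_1,\psi_2$. Let $\boldsymbol{X}=(X_1,\dots,X_n)$ have joint distribution function $\phi_1\big(\sum_{i=1}^n\psi_1([G(\lambda x_i)]^{\alpha_i})\big)$ and $\boldsymbol{X}^*=(X^*_1,\dots,X^*_n)$ have joint distribution function $\phi_2\big(\sum_{i=1}^n\psi_2([G(\lambda x_i)]^{\alpha^*_i})\big)$ (i.e. marginals $[G(\lambda x)]^{\alpha_i}$, resp. $[G(\lambda x)]^{\alpha^*_i}$, and Archimedean copulas with generators $\phi_1$, resp. $\phi_2$). (i) If $\phi_1$ or $\phi_2$ is log-convex, $\psi_2\circ\phi_1$ is super-additive, and $\sum_{i=j}^{n}\alpha^*_{(i)}\le\sum_{i=j}^{n}\alpha_{(i)}$ for all $j=1,\dots,n$, then $X_{n:n}\ge_{\rm st}X^*_{n:n}$. (ii) If $\phi_1$ or $\phi_2$ is log-concave, $\psi_1\circ\phi_2$ is super-additive, and $\sum_{i=1}^{j}\alpha^*_{(i)}\ge\sum_{i=1}^{j}\alpha_{(i)}$ for all $j=1,\dots,n$, then $X_{n:n}\le_{\rm st}X^*_{n:n}$.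
   Context: An Archimedean generator is an $n$-monotone function $\phi:[0,\infty)\to[0,1]$ with $\phi(0)=1$ and $\lim_{x\to\infty}\phi(x)=0$; $n$-monotone on $(a,b)$ means $(-1)^k\phi^{(k)}\ge0$ for $k=0,\dots,n-2$ and $(-1)^{n-2}\phi^{(n-2)}$ is decreasing and convex. $\psi=\phi^{-1}$ is its pseudo-inverse. A function $h$ is super-additive if $h(x+y)\ge h(x)+h(y)$ for all $x,y\ge0$. $X_{n:n}=\max_i X_i$. For a vector $\boldsymbol{x}$, $x_{(1)}\le\dots\le x_{(n)}$ are its components in increasing order. $X\le_{\rm st}Y$ means $P(X>x)\le P(Y>x)$ for all $x$. *)

theory Defs
  imports "HOL-Probability.Probability"
begin

definition n_monotone_on :: "nat \<Rightarrow> real set \<Rightarrow> (real \<Rightarrow> real) \<Rightarrow> bool" where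
  "n_monotone_on n S f \<longleftrightarrow>
     (\<forall>k. k + 2 < n \<longrightarrow> (\<forall>x\<in>S. ((deriv ^^ k) f) differentiable (at x))) \<and>
     (\<forall>k. k + 2 \<le> n \<longrightarrow> (\<forall>x\<in>S. (-1) ^ k * (deriv ^^ k) f x \<ge> 0)) \<and>
     antimono_on S (\<lambda>x. (-1) ^ (n - 2) * (deriv ^^ (n - 2)) f x) \<and>
     convex_on S (\<lambda>x. (-1) ^ (n - 2) * (deriv ^^ (n - 2)) f x)"

definition archimedean_generator :: "nat \<Rightarrow> (real \<Rightarrow> real) \<Rightarrow> bool" where
  "archimedean_generator n \<phi> \<longleftrightarrow>
     (\<forall>x\<ge>0. 0 \<le> \<phi> x \<and> \<phi> x \<le> 1) \<and> \<phi> 0 = 1 \<and>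
     continuous_on {0..} \<phi> \<and>
     (\<phi> \<longlongrightarrow> 0) at_top \<and>
     n_monotone_on n {0<..} \<phi>"

text \<open>Pseudo-inverse psi = phi^{-1}, with values in [0,oo]: psi(y) = inf {u \<ge> 0. phi u \<le> y};
  psi(0) = oo when phi is strict (never reaches 0).\<close>
definition pinv :: "(real \<Rightarrow> real) \<Rightarrow> real \<Rightarrow> ereal" where
  "pinv \<phi> y = Inf {ereal u | u. 0 \<le> u \<and> \<phi> u \<le> y}"

definition gen_ext :: "(real \<Rightarrow> real) \<Rightarrow> ereal \<Rightarrow> real" where
  "gen_ext \<phi> z = (if z = \<infinity> then 0 else \<phi> (real_of_ereal z))"

definition arch_copula :: "(real \<Rightarrow> real) \<Rightarrow> nat \<Rightarrow> (nat \<Rightarrow> real) \<Rightarrow> real" where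
  "arch_copula \<phi> n u = gen_ext \<phi> (\<Sum>i<n. pinv \<phi> (u i))"

definition super_additive :: "(real \<Rightarrow> ereal) \<Rightarrow> bool" where
  "super_additive h \<longleftrightarrow> (\<forall>x\<ge>0. \<forall>y\<ge>0. h (x + y) \<ge> h x + h y)"

text \<open>Log-convexity / log-concavity on S, for nonnegative f (zeros allowed, log 0 = -oo).\<close>
definition log_convex_on :: "real set \<Rightarrow> (real \<Rightarrow> real) \<Rightarrow> bool" where
  "log_convex_on S f \<longleftrightarrow> (\<forall>x\<in>S. 0 \<le> f x) \<and>
     (\<forall>x\<in>S. \<forall>y\<in>S. \<forall>t\<in>{0<..<1}. f ((1 - t) * x + t * y) \<le> f x powr (1 - t) * f y powr t)"

definition log_concave_on :: "real set \<Rightarrow> (real \<Rightarrow> real) \<Rightarrow> bool" where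
  "log_concave_on S f \<longleftrightarrow> (\<forall>x\<in>S. 0 \<le> f x) \<and>
     (\<forall>x\<in>S. \<forall>y\<in>S. \<forall>t\<in>{0<..<1}. f ((1 - t) * x + t * y) \<ge> f x powr (1 - t) * f y powr t)"

text \<open>Increasing rearrangement: x_(i) for i = 0..n-1 (i.e. x_(i+1) in 1-based notation).\<close>
definition ord_stat :: "nat \<Rightarrow> (nat \<Rightarrow> real) \<Rightarrow> nat \<Rightarrow> real" where
  "ord_stat n x i = sort (map x [0..<n]) ! i"

definition joint_cdf :: "'a measure \<Rightarrow> nat \<Rightarrow> ('a \<Rightarrow> nat \<Rightarrow> real) \<Rightarrow> (nat \<Rightarrow> real) \<Rightarrow> real" where
  "joint_cdf M n X x = measure M {\<omega> \<in> space M. \<forall>i<n. X \<omega> i \<le> x i}"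

definition max_stat :: "nat \<Rightarrow> (nat \<Rightarrow> real) \<Rightarrow> real" where
  "max_stat n x = Max (x ` {..<n})"

definition st_le :: "'a measure \<Rightarrow> ('a \<Rightarrow> real) \<Rightarrow> 'b measure \<Rightarrow> ('b \<Rightarrow> real) \<Rightarrow> bool" where
  "st_le M X N Y \<longleftrightarrow> (\<forall>x. measure M {\<omega> \<in> space M. X \<omega> > x} \<le> measure N {\<omega> \<in> space N. Y \<omega> > x})"

end

theory Submission
  imports Defs
begin


lemma subgrad_convex:
  fixes f :: "real \<Rightarrow> real"
  assumes cv: "convex_on {0<..} f" and x: "x > 0"
  shows "\<exists>c. \<forall>y>0. f y \<ge> f x + c * (y - x)"
proof -
  define L where "L = {(f x - f y) / (x - y) | y. 0 < y \<and> y < x}"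
  have ne: "L \<noteq> {}" using x unfolding L_def by (auto intro!: exI[of _ "x/2"])
  have ub: "l \<le> (f z - f x) / (z - x)" if "l \<in> L" "z > x" for l z
  proof -
    from that obtain y where y: "0 < y" "y < x" "l = (f x - f y) / (x - y)" unfolding L_def by auto
    have "(f y - f x) / (y - x) \<le> (f y - f z) / (y - z)"
      using convex_on_slope_le(1)[OF cv, of y z x] y that x by auto
    also have "\<dots> \<le> (f x - f z) / (x - z)"
      using convex_on_slope_le(2)[OF cv, of y z x] y that x by auto
    finally have "(f y - f x) / (y - x) \<le> (f x - f z) / (x - z)" .
    moreover have e: "(p - q)/(r - s) = (q - p)/(s - r)" for p q r s :: real
      by (metis minus_diff_eq minus_divide_divide)
    ultimately show ?thesis using y e by metis
  qed
  have bdd: "bdd_above L" using ub[of _ "x+1"] unfolding bdd_above_def by auto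
  show ?thesis
  proof (intro exI allI impI)
    fix y :: real assume y: "y > 0"
    consider "y < x" | "y = x" | "y > x" by linarith
    then show "f y \<ge> f x + Sup L * (y - x)"
    proof cases
      case 1
      have "(f x - f y) / (x - y) \<le> Sup L"
        by (rule cSup_upper[OF _ bdd]) (use 1 y in \<open>auto simp: L_def\<close>)
      then have "f x - f y \<le> Sup L * (x - y)" using 1 by (simp add: divide_le_eq)
      then show ?thesis by (simp add: algebra_simps)
    next
      case 2 then show ?thesis by simp
    next
      case 3
      have "Sup L \<le> (f y - f x) / (y - x)"
        by (rule cSup_least[OF ne]) (use ub 3 in auto)
      then have "Sup L * (y - x) \<le> f y - f x" using 3 by (simp add: le_divide_eq)
      then show ?thesis by simp
    qed
  qed
qed

lemma abel_tail:
  fixes c d :: "nat \<Rightarrow> real"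
  assumes "\<forall>i<n. c i \<ge> 0" "\<forall>i j. i \<le> j \<longrightarrow> j < n \<longrightarrow> c i \<le> c j"
    "\<forall>j<n. (\<Sum>i=j..<n. d i) \<ge> 0"
  shows "(\<Sum>i<n. c i * d i) \<ge> 0"
  using assms
proof (induction n arbitrary: c d)
  case 0 then show ?case by simp
next
  case (Suc n)
  define c' where "c' i = c (Suc i) - c 0" for i
  define d' where "d' i = d (Suc i)" for i
  have "(\<Sum>i<n. c' i * d' i) \<ge> 0"
  proof (rule Suc.IH)
    show "\<forall>i<n. 0 \<le> c' i" using Suc.prems(2) by (auto simp: c'_def)
    show "\<forall>i j. i \<le> j \<longrightarrow> j < n \<longrightarrow> c' i \<le> c' j" using Suc.prems(2) by (auto simp: c'_def)
    show "\<forall>j<n. 0 \<le> (\<Sum>i=j..<n. d' i)"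
    proof (intro allI impI)
      fix j assume "j < n"
      have "(\<Sum>i=j..<n. d' i) = (\<Sum>i=Suc j..<Suc n. d i)"
        unfolding d'_def by (rule sum.shift_bounds_Suc_ivl[symmetric])
      then show "0 \<le> (\<Sum>i=j..<n. d' i)" using Suc.prems(3) \<open>j < n\<close> by auto
    qed
  qed
  moreover have "c 0 * (\<Sum>i=0..<Suc n. d i) \<ge> 0" using Suc.prems(1,3) by auto
  moreover have "(\<Sum>i<Suc n. c i * d i) = c 0 * (\<Sum>i=0..<Suc n. d i) + (\<Sum>i<n. c' i * d' i)"
  proof -
    have "(\<Sum>i<Suc n. c i * d i) = c 0 * d 0 + (\<Sum>i<n. c (Suc i) * d (Suc i))"
      by (rule sum.lessThan_Suc_shift)
    moreover have "(\<Sum>i=0..<Suc n. d i) = d 0 + (\<Sum>i<n. d (Suc i))"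
      unfolding atLeast0LessThan by (rule sum.lessThan_Suc_shift)
    ultimately show ?thesis
      by (simp add: c'_def d'_def algebra_simps sum_distrib_left sum_subtractf)
  qed
  ultimately show ?case by linarith
qed

lemma abel_prefix:
  fixes c d :: "nat \<Rightarrow> real"
  assumes "\<forall>i<n. c i \<ge> 0" "\<forall>i j. i \<le> j \<longrightarrow> j < n \<longrightarrow> c j \<le> c i"
    "\<forall>j<n. (\<Sum>i<Suc j. d i) \<le> 0"
  shows "(\<Sum>i<n. c i * d i) \<le> 0"
  using assms
proof (induction n arbitrary: c)
  case 0 then show ?case by simp
next
  case (Suc n)
  define c' where "c' i = c i - c n" for i
  have "(\<Sum>i<n. c' i * d i) \<le> 0"
  proof (rule Suc.IH)
    show "\<forall>i<n. 0 \<le> c' i" using Suc.prems(2) by (simp add: c'_def)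
    show "\<forall>i j. i \<le> j \<longrightarrow> j < n \<longrightarrow> c' j \<le> c' i" using Suc.prems(2) by (simp add: c'_def)
    show "\<forall>j<n. (\<Sum>i<Suc j. d i) \<le> 0" using Suc.prems(3) by simp
  qed
  moreover have "c n * (\<Sum>i<Suc n. d i) \<le> 0" using Suc.prems(1,3)
    by (simp add: mult_nonneg_nonpos)
  moreover have "(\<Sum>i<Suc n. c i * d i) = c n * (\<Sum>i<Suc n. d i) + (\<Sum>i<n. c' i * d i)"
    by (simp add: c'_def algebra_simps sum_distrib_left sum_subtractf)
  ultimately show ?case by linarith
qed

lemma maj_convex:
  fixes f :: "real \<Rightarrow> real" and a b :: "nat \<Rightarrow> real"
  assumes cv: "convex_on {0<..} f" and mo: "mono_on {0<..} f"
    and apos: "\<forall>i<n. a i > 0" and bpos: "\<forall>i<n. b i > 0"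
    and bs: "\<forall>i j. i \<le> j \<longrightarrow> j < n \<longrightarrow> b i \<le> b j"
    and tl: "\<forall>j<n. (\<Sum>i=j..<n. b i) \<le> (\<Sum>i=j..<n. a i)"
  shows "(\<Sum>i<n. f (b i)) \<le> (\<Sum>i<n. f (a i))"
proof -
  define sg where "sg x = (SOME c. \<forall>y>0. f y \<ge> f x + c * (y - x))" for x
  define c where "c i = sg (b i)" for i
  have cP: "\<forall>y>0. f y \<ge> f (b i) + c i * (y - b i)" if "i < n" for i
    unfolding c_def sg_def by (rule someI_ex, rule subgrad_convex[OF cv]) (use bpos that in auto)
  have cnn: "\<forall>i<n. c i \<ge> 0"
  proof (intro allI impI)
    fix i assume i: "i < n"
    have "f (b i / 2) \<ge> f (b i) + c i * (b i / 2 - b i)" using cP[OF i, rule_format, of "b i / 2"] bpos i by auto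
    moreover have "f (b i / 2) \<le> f (b i)" using mo bpos i by (auto intro: mono_onD)
    ultimately have "c i * (b i / 2) \<ge> 0" by (simp add: algebra_simps)
    moreover have "b i > 0" using bpos i by simp
    ultimately show "c i \<ge> 0" by (simp add: zero_le_mult_iff)
  qed
  have cmono: "\<forall>i j. i \<le> j \<longrightarrow> j < n \<longrightarrow> c i \<le> c j"
  proof (intro allI impI)
    fix i j assume ij: "i \<le> j" "j < n"
    have 1: "f (b j) \<ge> f (b i) + c i * (b j - b i)" using cP[of i] ij bpos by auto
    have 2: "f (b i) \<ge> f (b j) + c j * (b i - b j)" using cP[of j] ij bpos by auto
    from 1 2 have "(c j - c i) * (b j - b i) \<ge> 0" by (simp add: algebra_simps)
    moreover have "b i \<le> b j" using bs ij by auto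
    ultimately show "c i \<le> c j"
      by (cases "b i = b j") (auto simp: zero_le_mult_iff c_def)
  qed
  have "(\<Sum>i<n. c i * (a i - b i)) \<ge> 0"
  proof (rule abel_tail[OF cnn cmono])
    show "\<forall>j<n. 0 \<le> (\<Sum>i = j..<n. a i - b i)" using tl by (simp add: sum_subtractf)
  qed
  also have "(\<Sum>i<n. c i * (a i - b i)) \<le> (\<Sum>i<n. f (a i) - f (b i))"
  proof (rule sum_mono)
    fix i assume "i \<in> {..<n}"
    then show "c i * (a i - b i) \<le> f (a i) - f (b i)" using cP[of i] apos by auto
  qed
  finally show ?thesis by (simp add: sum_subtractf)
qed

lemma maj_concave:
  fixes f :: "real \<Rightarrow> real" and a b :: "nat \<Rightarrow> real"
  assumes cv: "concave_on {0<..} f" and mo: "mono_on {0<..} f"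
    and apos: "\<forall>i<n. a i > 0" and bpos: "\<forall>i<n. b i > 0"
    and bs: "\<forall>i j. i \<le> j \<longrightarrow> j < n \<longrightarrow> b i \<le> b j"
    and pf: "\<forall>j<n. (\<Sum>i<Suc j. b i) \<ge> (\<Sum>i<Suc j. a i)"
  shows "(\<Sum>i<n. f (a i)) \<le> (\<Sum>i<n. f (b i))"
proof -
  have cv': "convex_on {0<..} (\<lambda>x. - f x)" using cv by (simp add: concave_on_def)
  define sg where "sg x = (SOME c. \<forall>y>0. - f y \<ge> - f x + c * (y - x))" for x
  define c where "c i = - sg (b i)" for i
  have cP: "\<forall>y>0. f y \<le> f (b i) + c i * (y - b i)" if "i < n" for i
  proof -
    have "\<forall>y>0. - f y \<ge> - f (b i) + sg (b i) * (y - b i)"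
      unfolding sg_def by (rule someI_ex, rule subgrad_convex[OF cv']) (use bpos that in auto)
    then show ?thesis by (auto simp: c_def algebra_simps)
  qed
  have cnn: "\<forall>i<n. c i \<ge> 0"
  proof (intro allI impI)
    fix i assume i: "i < n"
    have bi: "b i > 0" using bpos i by simp
    have "f (b i + 1) \<le> f (b i) + c i * (b i + 1 - b i)" using cP[OF i, rule_format, of "b i + 1"] bi by auto
    moreover have "f (b i) \<le> f (b i + 1)" using mo bi by (auto intro: mono_onD)
    ultimately show "c i \<ge> 0" by simp
  qed
  have cmono: "\<forall>i j. i \<le> j \<longrightarrow> j < n \<longrightarrow> c j \<le> c i"
  proof (intro allI impI)
    fix i j assume ij: "i \<le> j" "j < n"
    have 1: "f (b j) \<le> f (b i) + c i * (b j - b i)" using cP[of i] ij bpos by auto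
    have 2: "f (b i) \<le> f (b j) + c j * (b i - b j)" using cP[of j] ij bpos by auto
    from 1 2 have "(c i - c j) * (b j - b i) \<ge> 0" by (simp add: algebra_simps)
    moreover have "b i \<le> b j" using bs ij by auto
    ultimately show "c j \<le> c i"
      by (cases "b i = b j") (auto simp: zero_le_mult_iff c_def)
  qed
  have "(\<Sum>i<n. f (a i) - f (b i)) \<le> (\<Sum>i<n. c i * (a i - b i))"
  proof (rule sum_mono)
    fix i assume "i \<in> {..<n}"
    then show "f (a i) - f (b i) \<le> c i * (a i - b i)" using cP[of i] apos by auto
  qed
  also have "(\<Sum>i<n. c i * (a i - b i)) \<le> 0"
  proof (rule abel_prefix[OF cnn cmono])
    show "\<forall>j<n. (\<Sum>i<Suc j. a i - b i) \<le> 0" using pf by (simp add: sum_subtractf)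
  qed
  finally show ?thesis by (simp add: sum_subtractf)
qed



lemma gen_basic:
  assumes "archimedean_generator n \<phi>"
  shows "\<And>x. x \<ge> 0 \<Longrightarrow> 0 \<le> \<phi> x" "\<And>x. x \<ge> 0 \<Longrightarrow> \<phi> x \<le> 1" "\<phi> 0 = 1"
    "continuous_on {0..} \<phi>" "(\<phi> \<longlongrightarrow> 0) at_top" "n_monotone_on n {0<..} \<phi>"
  using assms unfolding archimedean_generator_def by auto

lemma gen_antimono_pos:
  assumes g: "archimedean_generator n \<phi>" and n: "n \<ge> 2"
  shows "antimono_on {0<..} \<phi>"
proof (cases "n = 2")
  case True
  then show ?thesis using gen_basic(6)[OF g] unfolding n_monotone_on_def by simp
next
  case False
  with n have n3: "n \<ge> 3" by simp
  have nm: "n_monotone_on n {0<..} \<phi>" using gen_basic(6)[OF g] .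
  have dif: "\<phi> differentiable (at x)" if "x > 0" for x
    using nm n3 that unfolding n_monotone_on_def by (auto dest!: spec[of _ 0])
  have dn: "deriv \<phi> x \<le> 0" if "x > 0" for x
  proof -
    have "(-1) ^ 1 * (deriv ^^ 1) \<phi> x \<ge> 0"
      using nm n3 that unfolding n_monotone_on_def by (auto dest!: spec[of _ 1])
    then show ?thesis by simp
  qed
  show ?thesis
  proof (rule monotone_onI)
    fix x y :: real assume xy: "x \<in> {0<..}" "y \<in> {0<..}" "x \<le> y"
    have "\<phi> y \<le> \<phi> x"
    proof (rule DERIV_nonpos_imp_decreasing_open[OF xy(3)])
      show "continuous_on {x..y} \<phi>"
        by (rule continuous_on_subset[OF gen_basic(4)[OF g]]) (use xy in auto)
    next
      fix t assume "x < t" "t < y"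
      then have "t > 0" using xy by auto
      then show "\<exists>y. DERIV \<phi> t :> y \<and> y \<le> 0"
        using dif dn DERIV_deriv_iff_real_differentiable by blast
    qed
    then show "\<phi> x \<ge> \<phi> y" by simp
  qed
qed

lemma gen_antimono:
  assumes g: "archimedean_generator n \<phi>" and n: "n \<ge> 2"
    and xy: "0 \<le> x" "x \<le> y"
  shows "\<phi> y \<le> \<phi> x"
proof (cases "x > 0")
  case True
  then show ?thesis using monotone_onD[OF gen_antimono_pos[OF g n], of x y] xy by auto
next
  case False
  then have x0: "x = 0" using xy by simp
  show ?thesis
  proof (cases "y = 0")
    case True then show ?thesis using x0 by simp
  next
    case False
    then have y: "y > 0" using xy x0 by simp
    have "(\<phi> \<longlongrightarrow> \<phi> 0) (at 0 within {0..})"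
      using gen_basic(4)[OF g] by (simp add: continuous_on_def)
    then have lim: "(\<phi> \<longlongrightarrow> \<phi> 0) (at_right 0)"
      by (rule tendsto_within_subset) auto
    have ev: "eventually (\<lambda>t. \<phi> y \<le> \<phi> t) (at_right (0::real))"
    proof -
      have "eventually (\<lambda>t. 0 < t \<and> t < y) (at_right (0::real))"
        using y by (auto simp: eventually_at_right_field intro!: exI[of _ y])
      then show ?thesis
    proof eventually_elim
      case (elim t)
      then show ?case using monotone_onD[OF gen_antimono_pos[OF g n], of t y] y by auto
    qed
    qed
    have "\<phi> y \<le> \<phi> 0" by (rule tendsto_le[OF _ lim tendsto_const ev]) simp
    then show ?thesis using x0 by simp
  qed
qed

lemma pinv_nonneg: "pinv \<phi> y \<ge> 0"
  unfolding pinv_def by (rule Inf_greatest) auto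

lemma pinv_le: "0 \<le> u \<Longrightarrow> \<phi> u \<le> y \<Longrightarrow> pinv \<phi> y \<le> ereal u"
  unfolding pinv_def by (rule Inf_lower) auto

lemma pinv_antimono: "y \<le> y' \<Longrightarrow> pinv \<phi> y' \<le> pinv \<phi> y"
  unfolding pinv_def by (rule Inf_superset_mono) auto

lemma pinv_empty: "\<not> (\<exists>u\<ge>0. \<phi> u \<le> y) \<Longrightarrow> pinv \<phi> y = \<infinity>"
  unfolding pinv_def by (auto simp: top_ereal_def[symmetric])

lemma pinv_char:
  assumes g: "archimedean_generator n \<phi>" and y1: "y \<le> 1" and ex: "\<exists>u\<ge>0. \<phi> u \<le> y"
  shows "\<exists>r\<ge>0. pinv \<phi> y = ereal r \<and> \<phi> r = y"
proof -
  define S where "S = {u. 0 \<le> u \<and> \<phi> u \<le> y}"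
  have ne: "S \<noteq> {}" using ex by (auto simp: S_def)
  have bdd: "bdd_below S" unfolding S_def by (rule bdd_belowI[of _ 0]) auto
  have cl: "closed S"
  proof -
    have "closed ({0..} \<inter> \<phi> -` {..y})"
      by (rule continuous_closed_preimage[OF gen_basic(4)[OF g]]) auto
    moreover have "{0..} \<inter> \<phi> -` {..y} = S" by (auto simp: S_def)
    ultimately show ?thesis by simp
  qed
  define r where "r = Inf S"
  have rS: "r \<in> S" unfolding r_def by (rule closed_contains_Inf[OF ne bdd cl])
  have eq: "pinv \<phi> y = ereal r"
  proof -
    have "{ereal u |u. 0 \<le> u \<and> \<phi> u \<le> y} = ereal ` S" by (auto simp: S_def)
    then show ?thesis unfolding pinv_def r_def using ereal_Inf'[OF bdd ne] by (simp add: image_ident)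
  qed
  have r0: "r \<ge> 0" using rS by (simp add: S_def)
  obtain u where u: "0 \<le> u" "u \<le> r" "\<phi> u = y"
  proof -
    have "\<exists>x. 0 \<le> x \<and> x \<le> r \<and> \<phi> x = y"
    proof (rule IVT2')
      show "\<phi> r \<le> y" using rS by (simp add: S_def)
      show "y \<le> \<phi> 0" using y1 gen_basic(3)[OF g] by simp
      show "0 \<le> r" by (rule r0)
      show "continuous_on {0..r} \<phi>"
        by (rule continuous_on_subset[OF gen_basic(4)[OF g]]) auto
    qed
    then show ?thesis using that by blast
  qed
  have "u \<in> S" using u by (simp add: S_def)
  then have "r \<le> u" unfolding r_def by (rule cInf_lower[OF _ bdd])
  then have "u = r" using u by simp
  then show ?thesis using eq r0 u by auto
qed

lemma gen_ext_nonneg: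
  assumes g: "archimedean_generator n \<phi>" and z: "z \<ge> 0"
  shows "gen_ext \<phi> z \<ge> 0" "gen_ext \<phi> z \<le> 1"
proof -
  have "real_of_ereal z \<ge> 0" using z by (simp add: real_of_ereal_pos)
  then show "gen_ext \<phi> z \<ge> 0" "gen_ext \<phi> z \<le> 1"
    unfolding gen_ext_def using gen_basic(1,2)[OF g] by auto
qed

lemma gen_ext_antimono:
  assumes g: "archimedean_generator n \<phi>" and n: "n \<ge> 2" and z: "0 \<le> z" "z \<le> z'"
  shows "gen_ext \<phi> z' \<le> gen_ext \<phi> z"
proof (cases "z' = \<infinity>")
  case True
  then show ?thesis using gen_ext_nonneg[OF g z(1)] by (simp add: gen_ext_def)
next
  case False
  then have zf: "z \<noteq> \<infinity>" using z by auto
  obtain a where a: "z = ereal a" using z zf by (cases z) auto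
  obtain b where b: "z' = ereal b" using z False by (cases z') auto
  have "0 \<le> a" "a \<le> b" using z a b by auto
  then show ?thesis using gen_antimono[OF g n] a b by (simp add: gen_ext_def)
qed

lemma gen_ext_pinv:
  assumes g: "archimedean_generator n \<phi>" and z: "0 \<le> z" "z \<le> 1"
  shows "gen_ext \<phi> (pinv \<phi> z) = z"
proof (cases "\<exists>u\<ge>0. \<phi> u \<le> z")
  case True
  then obtain r where "r \<ge> 0" "pinv \<phi> z = ereal r" "\<phi> r = z" using pinv_char[OF g z(2)] by blast
  then show ?thesis by (simp add: gen_ext_def)
next
  case False
  then have "z = 0"
  proof -
    have "eventually (\<lambda>x. \<phi> x < z \<or> z = 0) at_top"
    proof (cases "z = 0")
      case False
      then have "z > 0" using z by simp
      then show ?thesis using order_tendstoD(2)[OF gen_basic(5)[OF g]] by (auto elim: eventually_mono)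
    qed simp
    moreover have "eventually (\<lambda>x. x \<ge> (0::real)) at_top" by simp
    ultimately have "eventually (\<lambda>x. (\<phi> x < z \<or> z = 0) \<and> x \<ge> 0) at_top"
      by (rule eventually_conj)
    then obtain x where "(\<phi> x < z \<or> z = 0) \<and> x \<ge> 0" using eventually_happens'[OF trivial_limit_at_top_linorder] by blast
    then show ?thesis using False by force
  qed
  then show ?thesis using pinv_empty[OF False] by (simp add: gen_ext_def)
qed



lemma pinv_pos:
  assumes g: "archimedean_generator n \<phi>" and y: "0 < y" "y \<le> 1"
  shows "\<exists>r\<ge>0. pinv \<phi> y = ereal r \<and> \<phi> r = y"
proof (rule pinv_char[OF g y(2)])
  have "eventually (\<lambda>x. \<phi> x < y \<and> x \<ge> 0) at_top"
    using order_tendstoD(2)[OF gen_basic(5)[OF g] y(1)] eventually_ge_at_top[of 0]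
    by (rule eventually_conj)
  then obtain x where "\<phi> x < y \<and> x \<ge> 0"
    using eventually_happens'[OF trivial_limit_at_top_linorder] by blast
  then show "\<exists>u\<ge>0. \<phi> u \<le> y" by (auto intro!: exI[of _ x])
qed

lemma superadd_sum:
  fixes h :: "real \<Rightarrow> ereal" and m :: nat
  assumes sa: "super_additive h" and h0: "h 0 \<ge> 0" and r: "\<forall>i<m. r i \<ge> 0"
  shows "h (\<Sum>i<m. r i) \<ge> (\<Sum>i<m. h (r i))"
  using r
proof (induction m)
  case 0 then show ?case using h0 by simp
next
  case (Suc m)
  have "(\<Sum>i<Suc m. h (r i)) = (\<Sum>i<m. h (r i)) + h (r m)" by simp
  also have "\<dots> \<le> h (\<Sum>i<m. r i) + h (r m)"
  proof -
    have "(\<Sum>i<m. h (r i)) \<le> h (\<Sum>i<m. r i)" using Suc.IH Suc.prems by simp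
    then show ?thesis by (rule add_right_mono)
  qed
  also have "\<dots> \<le> h ((\<Sum>i<m. r i) + r m)"
  proof -
    have a: "(\<Sum>i<m. r i) \<ge> 0" using Suc.prems by (auto intro!: sum_nonneg)
    have b: "r m \<ge> 0" using Suc.prems by auto
    show ?thesis using sa[unfolded super_additive_def, rule_format, OF a b] .
  qed
  finally show ?case by simp
qed

lemma compare_gen:
  fixes y :: "nat \<Rightarrow> real" and m :: nat
  assumes g1: "archimedean_generator n \<phi>1" and g2: "archimedean_generator n \<phi>2" and n: "n \<ge> 2"
    and sa: "super_additive (pinv \<phi>2 \<circ> \<phi>1)" and y: "\<forall>i<m. 0 < y i \<and> y i \<le> 1"
  shows "gen_ext \<phi>1 (\<Sum>i<m. pinv \<phi>1 (y i)) \<le> gen_ext \<phi>2 (\<Sum>i<m. pinv \<phi>2 (y i))"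
proof -
  define r where "r i = real_of_ereal (pinv \<phi>1 (y i))" for i
  have rP: "r i \<ge> 0 \<and> pinv \<phi>1 (y i) = ereal (r i) \<and> \<phi>1 (r i) = y i" if "i < m" for i
    using pinv_pos[OF g1, of "y i"] y that unfolding r_def by auto
  have s1: "(\<Sum>i<m. pinv \<phi>1 (y i)) = ereal (\<Sum>i<m. r i)"
  proof -
    have "(\<Sum>i<m. pinv \<phi>1 (y i)) = (\<Sum>i<m. ereal (r i))" by (rule sum.cong) (use rP in auto)
    also have "\<dots> = ereal (\<Sum>i<m. r i)" by (rule sum_ereal)
    finally show ?thesis .
  qed
  define S where "S = (\<Sum>i<m. r i)"
  have S0: "S \<ge> 0" unfolding S_def using rP by (auto intro: sum_nonneg)
  have h0: "(pinv \<phi>2 \<circ> \<phi>1) 0 \<ge> 0" by (simp add: pinv_nonneg)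
  have "(\<Sum>i<m. pinv \<phi>2 (y i)) = (\<Sum>i<m. (pinv \<phi>2 \<circ> \<phi>1) (r i))"
    by (rule sum.cong) (use rP in auto)
  also have "\<dots> \<le> (pinv \<phi>2 \<circ> \<phi>1) S"
    unfolding S_def by (rule superadd_sum[OF sa h0]) (use rP in auto)
  finally have le: "(\<Sum>i<m. pinv \<phi>2 (y i)) \<le> pinv \<phi>2 (\<phi>1 S)" by simp
  have "gen_ext \<phi>1 (\<Sum>i<m. pinv \<phi>1 (y i)) = \<phi>1 S" using s1 by (simp add: gen_ext_def S_def)
  also have "\<dots> = gen_ext \<phi>2 (pinv \<phi>2 (\<phi>1 S))"
    using gen_ext_pinv[OF g2, of "\<phi>1 S"] gen_basic(1,2)[OF g1 S0] by simp
  also have "\<dots> \<le> gen_ext \<phi>2 (\<Sum>i<m. pinv \<phi>2 (y i))"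
    by (rule gen_ext_antimono[OF g2 n _ le]) (auto intro: sum_nonneg pinv_nonneg)
  finally show ?thesis .
qed

lemma psi_basic:
  assumes g: "archimedean_generator n \<phi>" and u: "0 < u" "u < 1" and a: "a > 0"
  shows "real_of_ereal (pinv \<phi> (u powr a)) \<ge> 0"
    "pinv \<phi> (u powr a) = ereal (real_of_ereal (pinv \<phi> (u powr a)))"
    "\<phi> (real_of_ereal (pinv \<phi> (u powr a))) = u powr a"
    "0 < u powr a" "u powr a < 1"
proof -
  have y1: "u powr a < 1" using powr_less_mono'[of u 0 a] u a by simp
  have y0: "0 < u powr a" using u by simp
  obtain r where "r \<ge> 0" "pinv \<phi> (u powr a) = ereal r" "\<phi> r = u powr a"
    using pinv_pos[OF g y0] y1 by auto
  then show "real_of_ereal (pinv \<phi> (u powr a)) \<ge> 0"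
    "pinv \<phi> (u powr a) = ereal (real_of_ereal (pinv \<phi> (u powr a)))"
    "\<phi> (real_of_ereal (pinv \<phi> (u powr a))) = u powr a" by auto
  show "0 < u powr a" "u powr a < 1" using y0 y1 by auto
qed

lemma psi_mono:
  assumes g: "archimedean_generator n \<phi>" and u: "0 < u" "u < 1"
  shows "mono_on {0<..} (\<lambda>a. real_of_ereal (pinv \<phi> (u powr a)))"
proof (rule monotone_onI)
  fix x y :: real assume xy: "x \<in> {0<..}" "y \<in> {0<..}" "x \<le> y"
  have "u powr y \<le> u powr x" using powr_mono'[OF xy(3)] u by simp
  then have "pinv \<phi> (u powr x) \<le> pinv \<phi> (u powr y)" by (rule pinv_antimono)
  then show "real_of_ereal (pinv \<phi> (u powr x)) \<le> real_of_ereal (pinv \<phi> (u powr y))"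
  proof -
    have e1: "pinv \<phi> (u powr x) = ereal (real_of_ereal (pinv \<phi> (u powr x)))"
      using psi_basic(2)[OF g u, of x] xy by simp
    have e2: "pinv \<phi> (u powr y) = ereal (real_of_ereal (pinv \<phi> (u powr y)))"
      using psi_basic(2)[OF g u, of y] xy by simp
    show ?thesis using \<open>pinv \<phi> (u powr x) \<le> pinv \<phi> (u powr y)\<close> by (subst (asm) e1, subst (asm) e2) simp
  qed
qed

lemma psi_convex:
  assumes g: "archimedean_generator n \<phi>" and lc: "log_convex_on {0..} \<phi>" and u: "0 < u" "u < 1"
  shows "convex_on {0<..} (\<lambda>a. real_of_ereal (pinv \<phi> (u powr a)))"
proof (rule convex_on_linorderI)
  show "convex ({0<..} :: real set)" by simp
  define P where "P a = real_of_ereal (pinv \<phi> (u powr a))" for a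
  fix t x y :: real assume t: "0 < t" "t < 1" and xy: "x \<in> {0<..}" "y \<in> {0<..}" "x < y"
  define z where "z = (1 - t) * x + t * y"
  have z0: "z > 0" using t xy unfolding z_def by (auto intro: add_pos_pos)
  define p where "p = (1 - t) * P x + t * P y"
  have Px: "P x \<ge> 0" "\<phi> (P x) = u powr x" using psi_basic[OF g u, of x] xy by (auto simp: P_def)
  have Py: "P y \<ge> 0" "\<phi> (P y) = u powr y" using psi_basic[OF g u, of y] xy by (auto simp: P_def)
  have p0: "p \<ge> 0" using Px Py t unfolding p_def by auto
  have "\<phi> p \<le> \<phi> (P x) powr (1 - t) * \<phi> (P y) powr t"
  proof -
    have H: "\<forall>x\<in>{0..}. \<forall>y\<in>{0..}. \<forall>t\<in>{0<..<1}. \<phi> ((1 - t) * x + t * y) \<le> \<phi> x powr (1 - t) * \<phi> y powr t"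
      using lc unfolding log_convex_on_def by blast
    have "P x \<in> {0..}" "P y \<in> {0..}" "t \<in> {0<..<1}" using Px Py t by auto
    from H[rule_format, OF this] show ?thesis unfolding p_def .
  qed
  also have "\<dots> = u powr z"
    using Px Py by (simp add: powr_powr powr_add z_def mult.commute)
  finally have "pinv \<phi> (u powr z) \<le> ereal p" by (rule pinv_le[OF p0])
  then have "P z \<le> p" using psi_basic(2)[OF g u z0] by (metis P_def ereal_less_eq(3))
  then show "(\<lambda>a. real_of_ereal (pinv \<phi> (u powr a))) ((1 - t) *\<^sub>R x + t *\<^sub>R y)
      \<le> (1 - t) * (\<lambda>a. real_of_ereal (pinv \<phi> (u powr a))) x + t * (\<lambda>a. real_of_ereal (pinv \<phi> (u powr a))) y"
    by (simp add: P_def p_def z_def)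
qed

lemma psi_concave:
  assumes g: "archimedean_generator n \<phi>" and lc: "log_concave_on {0..} \<phi>" and u: "0 < u" "u < 1"
  shows "concave_on {0<..} (\<lambda>a. real_of_ereal (pinv \<phi> (u powr a)))"
proof (rule concave_on_linorderI)
  show "convex ({0<..} :: real set)" by simp
  define P where "P a = real_of_ereal (pinv \<phi> (u powr a))" for a
  fix t x y :: real assume t: "0 < t" "t < 1" and xy: "x \<in> {0<..}" "y \<in> {0<..}" "x < y"
  define z where "z = (1 - t) * x + t * y"
  have z0: "z > 0" using t xy unfolding z_def by (auto intro: add_pos_pos)
  define p where "p = (1 - t) * P x + t * P y"
  have Px: "P x \<ge> 0" "\<phi> (P x) = u powr x" using psi_basic[OF g u, of x] xy by (auto simp: P_def)
  have Py: "P y \<ge> 0" "\<phi> (P y) = u powr y" using psi_basic[OF g u, of y] xy by (auto simp: P_def)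
  have Pz: "P z \<ge> 0" "\<phi> (P z) = u powr z" "u powr z < 1" "0 < u powr z"
    using psi_basic[OF g u z0] by (auto simp: P_def)
  have p0: "p \<ge> 0" using Px Py t unfolding p_def by auto
  have "\<phi> (P x) powr (1 - t) * \<phi> (P y) powr t \<le> \<phi> p"
  proof -
    have H: "\<forall>x\<in>{0..}. \<forall>y\<in>{0..}. \<forall>t\<in>{0<..<1}. \<phi> ((1 - t) * x + t * y) \<ge> \<phi> x powr (1 - t) * \<phi> y powr t"
      using lc unfolding log_concave_on_def by blast
    have "P x \<in> {0..}" "P y \<in> {0..}" "t \<in> {0<..<1}" using Px Py t by auto
    from H[rule_format, OF this] show ?thesis unfolding p_def .
  qed
  also have "\<phi> (P x) powr (1 - t) * \<phi> (P y) powr t = u powr z"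
    using Px Py by (simp add: powr_powr powr_add z_def mult.commute)
  finally have wp: "u powr z \<le> \<phi> p" .
  have "p \<le> P z"
  proof (rule ccontr)
    assume "\<not> p \<le> P z"
    then have qp: "P z < p" by simp
    show False
    proof (cases "P z = 0")
      case True
      then show False using Pz gen_basic(3)[OF g] by simp
    next
      case False
      then have q0: "P z > 0" using Pz by simp
      define \<theta> where "\<theta> = P z / p"
      have th: "0 < \<theta>" "\<theta> < 1" using q0 qp unfolding \<theta>_def by (auto simp: divide_simps)
      have "(1 - \<theta>) * 0 + \<theta> * p = P z" using qp q0 unfolding \<theta>_def by simp
      then have "\<phi> 0 powr (1 - \<theta>) * \<phi> p powr \<theta> \<le> \<phi> (P z)"
        using lc p0 th unfolding log_concave_on_def by (metis atLeast_iff greaterThanLessThan_iff order_refl)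
      then have A: "\<phi> p powr \<theta> \<le> u powr z" using gen_basic(3)[OF g] Pz by simp
      have fp: "0 < \<phi> p" "\<phi> p \<le> 1" using wp Pz(4) gen_basic(2)[OF g p0] by linarith+
      have B: "\<phi> p \<le> \<phi> p powr \<theta>" using powr_mono'[of \<theta> 1 "\<phi> p"] th fp by simp
      have "\<phi> p powr \<theta> = \<phi> p" using A B wp by simp
      then have "\<theta> * ln (\<phi> p) = ln (\<phi> p)" by (metis ln_powr)
      then have "ln (\<phi> p) = 0" using th by (metis mult_cancel_right1 order_less_irrefl)
      then have "\<phi> p = 1" using fp by simp
      then show False using A B wp Pz by simp
    qed
  qed
  then show "(1 - t) * (\<lambda>a. real_of_ereal (pinv \<phi> (u powr a))) x + t * (\<lambda>a. real_of_ereal (pinv \<phi> (u powr a))) y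
      \<le> (\<lambda>a. real_of_ereal (pinv \<phi> (u powr a))) ((1 - t) *\<^sub>R x + t *\<^sub>R y)"
    by (simp add: P_def p_def z_def)
qed



lemma sum_ord_stat:
  fixes x :: "nat \<Rightarrow> real" and f :: "real \<Rightarrow> 'b::comm_monoid_add"
  shows "(\<Sum>i<n. f (ord_stat n x i)) = (\<Sum>i<n. f (x i))"
proof -
  define l where "l = sort (map x [0..<n])"
  have len: "length l = n" by (simp add: l_def)
  have "(\<Sum>i<n. f (ord_stat n x i)) = (\<Sum>i<length l. map f l ! i)"
    by (rule sum.cong) (auto simp: ord_stat_def l_def[symmetric] len)
  also have "\<dots> = sum_list (map f l)"
    by (simp add: sum_list_sum_nth atLeast0LessThan)
  also have "\<dots> = sum_mset (image_mset f (mset l))"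
    by (metis mset_map sum_mset_sum_list)
  also have "\<dots> = sum_mset (image_mset f (mset (map x [0..<n])))"
    by (simp add: l_def)
  also have "\<dots> = sum_list (map f (map x [0..<n]))"
    by (metis mset_map sum_mset_sum_list)
  also have "\<dots> = (\<Sum>i<n. f (x i))"
    by (simp add: sum_set_upt_conv_sum_list_nat[symmetric] atLeast0LessThan o_def)
  finally show ?thesis .
qed

lemma ord_stat_sorted:
  "i \<le> j \<Longrightarrow> j < n \<Longrightarrow> ord_stat n x i \<le> ord_stat n x j"
  unfolding ord_stat_def by (rule sorted_nth_mono) auto

lemma ord_stat_in:
  assumes "i < n" shows "\<exists>k<n. ord_stat n x i = x k"
proof -
  have "ord_stat n x i \<in> set (sort (map x [0..<n]))"
    unfolding ord_stat_def using assms by (intro nth_mem) simp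
  then show ?thesis by auto
qed

lemma prob_max:
  assumes M: "prob_space M" and Xrv: "\<forall>i<n. (\<lambda>\<omega>. X \<omega> i) \<in> borel_measurable M" and n: "n \<ge> 1"
  shows "measure M {\<omega> \<in> space M. max_stat n (X \<omega>) > x} = 1 - joint_cdf M n X (\<lambda>_. x)"
proof -
  have A: "{\<omega> \<in> space M. \<forall>i<n. X \<omega> i \<le> x} \<in> sets M"
  proof -
    have each: "{\<omega> \<in> space M. X \<omega> i \<le> x} \<in> sets M" if "i \<in> {..<n}" for i
    proof -
      have "(\<lambda>\<omega>. X \<omega> i) \<in> borel_measurable M" using Xrv that by blast
      then show ?thesis unfolding borel_measurable_iff_le by blast
    qed
    have "{\<omega> \<in> space M. \<forall>i\<in>{..<n}. X \<omega> i \<le> x} \<in> sets M"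
      by (rule sets.sets_Collect_finite_All[OF each]) auto
    then show ?thesis by (simp only: lessThan_iff Ball_def)
  qed
  have ne: "{..<n} \<noteq> {}" using n by (simp add: lessThan_empty_iff)
  have "{\<omega> \<in> space M. max_stat n (X \<omega>) > x} = space M - {\<omega> \<in> space M. \<forall>i<n. X \<omega> i \<le> x}"
  proof -
    have H: "x < Max (X \<omega> ` {..<n}) \<longleftrightarrow> \<not> (\<forall>i<n. X \<omega> i \<le> x)" for \<omega>
    proof -
      have "x < Max (X \<omega> ` {..<n}) \<longleftrightarrow> (\<exists>a\<in>X \<omega> ` {..<n}. x < a)"
        by (rule Max_gr_iff) (use ne in auto)
      also have "\<dots> \<longleftrightarrow> \<not> (\<forall>i<n. X \<omega> i \<le> x)" by (auto simp: not_le)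
      finally show ?thesis .
    qed
    show ?thesis
    proof (rule set_eqI)
      fix \<omega> show "\<omega> \<in> {\<omega> \<in> space M. x < max_stat n (X \<omega>)} \<longleftrightarrow> \<omega> \<in> space M - {\<omega> \<in> space M. \<forall>i<n. X \<omega> i \<le> x}"
        unfolding max_stat_def using H[of \<omega>] by blast
    qed
  qed
  moreover have "measure M (space M - {\<omega> \<in> space M. \<forall>i<n. X \<omega> i \<le> x}) = 1 - measure M {\<omega> \<in> space M. \<forall>i<n. X \<omega> i \<le> x}"
    by (rule prob_space.prob_compl[OF M A])
  ultimately show ?thesis unfolding joint_cdf_def by simp
qed

lemma pinv_one:
  assumes g: "archimedean_generator n \<phi>" shows "pinv \<phi> 1 = 0"
proof -
  have "pinv \<phi> 1 \<le> ereal 0" by (rule pinv_le) (use gen_basic(3)[OF g] in auto)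
  then show ?thesis using pinv_nonneg[of \<phi> 1] by (simp add: zero_ereal_def)
qed

lemma one_case:
  fixes m :: nat and a :: "nat \<Rightarrow> real"
  assumes g: "archimedean_generator n \<phi>"
  shows "gen_ext \<phi> (\<Sum>i<m. pinv \<phi> (1 powr a i)) = 1"
  using pinv_one[OF g] gen_basic(3)[OF g] by (simp add: gen_ext_def)

lemma zero_case:
  fixes m :: nat and a :: "nat \<Rightarrow> real"
  assumes g: "archimedean_generator n \<phi>" and n: "n \<ge> 2" and m: "m \<ge> 1"
  shows "gen_ext \<phi> (\<Sum>i<m. pinv \<phi> (0 powr a i)) = 0"
proof (cases "\<exists>u\<ge>0. \<phi> u \<le> 0")
  case True
  then obtain r where r: "r \<ge> 0" "pinv \<phi> 0 = ereal r" "\<phi> r = 0"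
    using pinv_char[OF g, of 0] by auto
  have "(\<Sum>i<m. pinv \<phi> (0 powr a i)) = ereal (real m * r)"
    using r by (simp add: sum_ereal[symmetric])
  moreover have "\<phi> (real m * r) \<le> \<phi> r"
    by (rule gen_antimono[OF g n r(1)]) (use m r in \<open>simp add: mult_le_cancel_right1\<close>)
  moreover have "\<phi> (real m * r) \<ge> 0" using gen_basic(1)[OF g] r m by simp
  ultimately show ?thesis using r by (simp add: gen_ext_def)
next
  case False
  then have "pinv \<phi> 0 = \<infinity>" by (rule pinv_empty)
  then have "(\<Sum>i<m. pinv \<phi> (0 powr a i)) = \<infinity>" using m by (simp add: sum_Pinfty) (metis One_nat_def less_eq_Suc_le)
  then show ?thesis by (simp add: gen_ext_def)
qed

lemma sum_pinv_eq:
  fixes m :: nat and a :: "nat \<Rightarrow> real"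
  assumes g: "archimedean_generator n \<phi>" and v: "0 < v" "v < 1" and a: "\<forall>i<m. a i > 0"
  shows "(\<Sum>i<m. pinv \<phi> (v powr a i)) = ereal (\<Sum>i<m. real_of_ereal (pinv \<phi> (v powr a i)))"
proof -
  have "(\<Sum>i<m. pinv \<phi> (v powr a i)) = (\<Sum>i<m. ereal (real_of_ereal (pinv \<phi> (v powr a i))))"
    by (rule sum.cong) (use psi_basic(2)[OF g v] a in auto)
  also have "\<dots> = ereal (\<Sum>i<m. real_of_ereal (pinv \<phi> (v powr a i)))" by (rule sum_ereal)
  finally show ?thesis .
qed

lemma sum_Q_nonneg:
  fixes m :: nat and a :: "nat \<Rightarrow> real"
  assumes g: "archimedean_generator n \<phi>" and v: "0 < v" "v < 1" and a: "\<forall>i<m. a i > 0"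
  shows "(\<Sum>i<m. real_of_ereal (pinv \<phi> (v powr a i))) \<ge> 0"
  by (rule sum_nonneg) (use psi_basic(1)[OF g v] a in auto)

lemma gen_ext_ereal_mono:
  assumes g: "archimedean_generator n \<phi>" and n: "n \<ge> 2" and "0 \<le> B" "B \<le> A"
  shows "gen_ext \<phi> (ereal A) \<le> gen_ext \<phi> (ereal B)"
  by (rule gen_ext_antimono[OF g n]) (use assms in auto)

lemma maj_step_convex:
  fixes a b :: "nat \<Rightarrow> real"
  assumes g: "archimedean_generator n \<phi>" and lc: "log_convex_on {0..} \<phi>" and v: "0 < v" "v < 1"
    and apos: "\<forall>i<m. a i > 0" and bpos: "\<forall>i<m. b i > 0"
    and tl: "\<forall>j<m. (\<Sum>i=j..<m. ord_stat m b i) \<le> (\<Sum>i=j..<m. ord_stat m a i)"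
  shows "(\<Sum>i<m. real_of_ereal (pinv \<phi> (v powr b i))) \<le> (\<Sum>i<m. real_of_ereal (pinv \<phi> (v powr a i)))"
proof -
  let ?Q = "\<lambda>t. real_of_ereal (pinv \<phi> (v powr t))"
  have "(\<Sum>i<m. ?Q (b i)) = (\<Sum>i<m. ?Q (ord_stat m b i))" by (rule sum_ord_stat[symmetric])
  also have "\<dots> \<le> (\<Sum>i<m. ?Q (ord_stat m a i))"
  proof (rule maj_convex[OF psi_convex[OF g lc v] psi_mono[OF g v]])
    show "\<forall>i<m. 0 < ord_stat m a i" using ord_stat_in apos by metis
    show "\<forall>i<m. 0 < ord_stat m b i" using ord_stat_in bpos by metis
    show "\<forall>i j. i \<le> j \<longrightarrow> j < m \<longrightarrow> ord_stat m b i \<le> ord_stat m b j" using ord_stat_sorted by blast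
  qed (rule tl)
  also have "\<dots> = (\<Sum>i<m. ?Q (a i))" by (rule sum_ord_stat)
  finally show ?thesis .
qed

lemma maj_step_concave:
  fixes a b :: "nat \<Rightarrow> real"
  assumes g: "archimedean_generator n \<phi>" and lc: "log_concave_on {0..} \<phi>" and v: "0 < v" "v < 1"
    and apos: "\<forall>i<m. a i > 0" and bpos: "\<forall>i<m. b i > 0"
    and pf: "\<forall>j<m. (\<Sum>i<Suc j. ord_stat m b i) \<ge> (\<Sum>i<Suc j. ord_stat m a i)"
  shows "(\<Sum>i<m. real_of_ereal (pinv \<phi> (v powr a i))) \<le> (\<Sum>i<m. real_of_ereal (pinv \<phi> (v powr b i)))"
proof -
  let ?Q = "\<lambda>t. real_of_ereal (pinv \<phi> (v powr t))"
  have "(\<Sum>i<m. ?Q (a i)) = (\<Sum>i<m. ?Q (ord_stat m a i))" by (rule sum_ord_stat[symmetric])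
  also have "\<dots> \<le> (\<Sum>i<m. ?Q (ord_stat m b i))"
  proof (rule maj_concave[OF psi_concave[OF g lc v] psi_mono[OF g v]])
    show "\<forall>i<m. 0 < ord_stat m a i" using ord_stat_in apos by metis
    show "\<forall>i<m. 0 < ord_stat m b i" using ord_stat_in bpos by metis
    show "\<forall>i j. i \<le> j \<longrightarrow> j < m \<longrightarrow> ord_stat m b i \<le> ord_stat m b j" using ord_stat_sorted by blast
  qed (rule pf)
  also have "\<dots> = (\<Sum>i<m. ?Q (b i))" by (rule sum_ord_stat)
  finally show ?thesis .
qed

lemma val_i:
  fixes \<alpha> \<alpha>s :: "nat \<Rightarrow> real"
  assumes g1: "archimedean_generator n \<phi>1" and g2: "archimedean_generator n \<phi>2" and n: "n \<ge> 2"
    and lc: "log_convex_on {0..} \<phi>1 \<or> log_convex_on {0..} \<phi>2"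
    and sa: "super_additive (pinv \<phi>2 \<circ> \<phi>1)"
    and apos: "\<forall>i<n. \<alpha> i > 0" and aspos: "\<forall>i<n. \<alpha>s i > 0"
    and tl: "\<forall>j<n. (\<Sum>i=j..<n. ord_stat n \<alpha>s i) \<le> (\<Sum>i=j..<n. ord_stat n \<alpha> i)"
    and v: "0 \<le> v" "v \<le> 1"
  shows "gen_ext \<phi>1 (\<Sum>i<n. pinv \<phi>1 (v powr \<alpha> i)) \<le> gen_ext \<phi>2 (\<Sum>i<n. pinv \<phi>2 (v powr \<alpha>s i))"
proof -
  consider "v = 0" | "v = 1" | "0 < v \<and> v < 1" using v by linarith
  then show ?thesis
  proof cases
    case 1
    have n1: "n \<ge> 1" using n by simp
    have z: "(\<Sum>i<n. pinv \<phi>2 (v powr \<alpha>s i)) \<ge> 0" by (rule sum_nonneg) (simp add: pinv_nonneg)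
    show ?thesis unfolding 1 using zero_case[OF g1 n n1, where a=\<alpha>] gen_ext_nonneg(1)[OF g2 z] 1 by simp
  next
    case 2
    then show ?thesis using one_case[OF g1, where m=n and a=\<alpha>] one_case[OF g2, where m=n and a=\<alpha>s] by simp
  next
    case 3
    then have v0: "0 < v" and v1: "v < 1" by auto
    have y: "\<forall>i<n. 0 < v powr \<alpha> i \<and> v powr \<alpha> i \<le> 1" 
    proof (intro allI impI)
      fix i assume "i < n"
      then show "0 < v powr \<alpha> i \<and> v powr \<alpha> i \<le> 1" using apos v0 v1 powr_le1[of "\<alpha> i" v] by auto
    qed
    have ys: "\<forall>i<n. 0 < v powr \<alpha>s i \<and> v powr \<alpha>s i \<le> 1" 
    proof (intro allI impI)
      fix i assume "i < n"
      then show "0 < v powr \<alpha>s i \<and> v powr \<alpha>s i \<le> 1" using aspos v0 v1 powr_le1[of "\<alpha>s i" v] by auto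
    qed
    from lc show ?thesis
    proof
      assume lc1: "log_convex_on {0..} \<phi>1"
      have "gen_ext \<phi>1 (\<Sum>i<n. pinv \<phi>1 (v powr \<alpha> i)) \<le> gen_ext \<phi>1 (\<Sum>i<n. pinv \<phi>1 (v powr \<alpha>s i))"
        unfolding sum_pinv_eq[OF g1 v0 v1 apos] sum_pinv_eq[OF g1 v0 v1 aspos]
        by (rule gen_ext_ereal_mono[OF g1 n sum_Q_nonneg[OF g1 v0 v1 aspos] maj_step_convex[OF g1 lc1 v0 v1 apos aspos tl]])
      also have "\<dots> \<le> gen_ext \<phi>2 (\<Sum>i<n. pinv \<phi>2 (v powr \<alpha>s i))"
        by (rule compare_gen[OF g1 g2 n sa ys])
      finally show ?thesis .
    next
      assume lc2: "log_convex_on {0..} \<phi>2"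
      have "gen_ext \<phi>1 (\<Sum>i<n. pinv \<phi>1 (v powr \<alpha> i)) \<le> gen_ext \<phi>2 (\<Sum>i<n. pinv \<phi>2 (v powr \<alpha> i))"
        by (rule compare_gen[OF g1 g2 n sa y])
      also have "\<dots> \<le> gen_ext \<phi>2 (\<Sum>i<n. pinv \<phi>2 (v powr \<alpha>s i))"
        unfolding sum_pinv_eq[OF g2 v0 v1 apos] sum_pinv_eq[OF g2 v0 v1 aspos]
        by (rule gen_ext_ereal_mono[OF g2 n sum_Q_nonneg[OF g2 v0 v1 aspos] maj_step_convex[OF g2 lc2 v0 v1 apos aspos tl]])
      finally show ?thesis .
    qed
  qed
qed

lemma val_ii:
  fixes \<alpha> \<alpha>s :: "nat \<Rightarrow> real"
  assumes g1: "archimedean_generator n \<phi>1" and g2: "archimedean_generator n \<phi>2" and n: "n \<ge> 2"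
    and lc: "log_concave_on {0..} \<phi>1 \<or> log_concave_on {0..} \<phi>2"
    and sa: "super_additive (pinv \<phi>1 \<circ> \<phi>2)"
    and apos: "\<forall>i<n. \<alpha> i > 0" and aspos: "\<forall>i<n. \<alpha>s i > 0"
    and pf: "\<forall>j<n. (\<Sum>i<Suc j. ord_stat n \<alpha>s i) \<ge> (\<Sum>i<Suc j. ord_stat n \<alpha> i)"
    and v: "0 \<le> v" "v \<le> 1"
  shows "gen_ext \<phi>2 (\<Sum>i<n. pinv \<phi>2 (v powr \<alpha>s i)) \<le> gen_ext \<phi>1 (\<Sum>i<n. pinv \<phi>1 (v powr \<alpha> i))"
proof -
  consider "v = 0" | "v = 1" | "0 < v \<and> v < 1" using v by linarith
  then show ?thesis
  proof cases
    case 1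
    have n1: "n \<ge> 1" using n by simp
    have z: "(\<Sum>i<n. pinv \<phi>1 (v powr \<alpha> i)) \<ge> 0" by (rule sum_nonneg) (simp add: pinv_nonneg)
    show ?thesis unfolding 1 using zero_case[OF g2 n n1, where a=\<alpha>s] gen_ext_nonneg(1)[OF g1 z] 1 by simp
  next
    case 2
    then show ?thesis using one_case[OF g1, where m=n and a=\<alpha>] one_case[OF g2, where m=n and a=\<alpha>s] by simp
  next
    case 3
    then have v0: "0 < v" and v1: "v < 1" by auto
    have y: "\<forall>i<n. 0 < v powr \<alpha> i \<and> v powr \<alpha> i \<le> 1" 
    proof (intro allI impI)
      fix i assume "i < n"
      then show "0 < v powr \<alpha> i \<and> v powr \<alpha> i \<le> 1" using apos v0 v1 powr_le1[of "\<alpha> i" v] by auto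
    qed
    have ys: "\<forall>i<n. 0 < v powr \<alpha>s i \<and> v powr \<alpha>s i \<le> 1" 
    proof (intro allI impI)
      fix i assume "i < n"
      then show "0 < v powr \<alpha>s i \<and> v powr \<alpha>s i \<le> 1" using aspos v0 v1 powr_le1[of "\<alpha>s i" v] by auto
    qed
    from lc show ?thesis
    proof
      assume lc1: "log_concave_on {0..} \<phi>1"
      have "gen_ext \<phi>2 (\<Sum>i<n. pinv \<phi>2 (v powr \<alpha>s i)) \<le> gen_ext \<phi>1 (\<Sum>i<n. pinv \<phi>1 (v powr \<alpha>s i))"
        by (rule compare_gen[OF g2 g1 n sa ys])
      also have "\<dots> \<le> gen_ext \<phi>1 (\<Sum>i<n. pinv \<phi>1 (v powr \<alpha> i))"
        unfolding sum_pinv_eq[OF g1 v0 v1 apos] sum_pinv_eq[OF g1 v0 v1 aspos]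
        by (rule gen_ext_ereal_mono[OF g1 n sum_Q_nonneg[OF g1 v0 v1 apos] maj_step_concave[OF g1 lc1 v0 v1 apos aspos pf]])
      finally show ?thesis .
    next
      assume lc2: "log_concave_on {0..} \<phi>2"
      have "gen_ext \<phi>2 (\<Sum>i<n. pinv \<phi>2 (v powr \<alpha>s i)) \<le> gen_ext \<phi>2 (\<Sum>i<n. pinv \<phi>2 (v powr \<alpha> i))"
        unfolding sum_pinv_eq[OF g2 v0 v1 apos] sum_pinv_eq[OF g2 v0 v1 aspos]
        by (rule gen_ext_ereal_mono[OF g2 n sum_Q_nonneg[OF g2 v0 v1 apos] maj_step_concave[OF g2 lc2 v0 v1 apos aspos pf]])
      also have "\<dots> \<le> gen_ext \<phi>1 (\<Sum>i<n. pinv \<phi>1 (v powr \<alpha> i))"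
        by (rule compare_gen[OF g2 g1 n sa y])
      finally show ?thesis .
    qed
  qed
qed

theorem mainTheorem6:
  fixes n :: nat and G :: "real \<Rightarrow> real" and lam :: real
    and \<alpha> \<alpha>s :: "nat \<Rightarrow> real" and \<phi>1 \<phi>2 :: "real \<Rightarrow> real"
    and M :: "'a measure" and X :: "'a \<Rightarrow> nat \<Rightarrow> real"
    and Ms :: "'b measure" and Xs :: "'b \<Rightarrow> nat \<Rightarrow> real"
  assumes n: "n \<ge> 2"
    and G: "\<exists>D. real_distribution D \<and> absolutely_continuous lborel D \<and>
              measure D {..<0} = 0 \<and> G = cdf D"
    and lam: "lam > 0"
    and alpha_pos: "\<forall>i<n. \<alpha> i > 0" and alphas_pos: "\<forall>i<n. \<alpha>s i > 0"
    and gen1: "archimedean_generator n \<phi>1" and gen2: "archimedean_generator n \<phi>2"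
    and M: "prob_space M" and Xrv: "\<forall>i<n. (\<lambda>\<omega>. X \<omega> i) \<in> borel_measurable M"
    and Xcdf: "\<forall>x. joint_cdf M n X x = arch_copula \<phi>1 n (\<lambda>i. G (lam * x i) powr \<alpha> i)"
    and Ms: "prob_space Ms" and Xsrv: "\<forall>i<n. (\<lambda>\<omega>. Xs \<omega> i) \<in> borel_measurable Ms"
    and Xscdf: "\<forall>x. joint_cdf Ms n Xs x = arch_copula \<phi>2 n (\<lambda>i. G (lam * x i) powr \<alpha>s i)"
  shows
    "((log_convex_on {0..} \<phi>1 \<or> log_convex_on {0..} \<phi>2) \<and>
      super_additive (pinv \<phi>2 \<circ> \<phi>1) \<and>
      (\<forall>j<n. (\<Sum>i=j..<n. ord_stat n \<alpha>s i) \<le> (\<Sum>i=j..<n. ord_stat n \<alpha> i))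
      \<longrightarrow> st_le Ms (\<lambda>\<omega>. max_stat n (Xs \<omega>)) M (\<lambda>\<omega>. max_stat n (X \<omega>)))
   \<and>
    ((log_concave_on {0..} \<phi>1 \<or> log_concave_on {0..} \<phi>2) \<and>
      super_additive (pinv \<phi>1 \<circ> \<phi>2) \<and>
      (\<forall>j<n. (\<Sum>i<Suc j. ord_stat n \<alpha>s i) \<ge> (\<Sum>i<Suc j. ord_stat n \<alpha> i))
      \<longrightarrow> st_le M (\<lambda>\<omega>. max_stat n (X \<omega>)) Ms (\<lambda>\<omega>. max_stat n (Xs \<omega>)))"
proof -
  obtain D where D: "real_distribution D" "G = cdf D" using G by blast
  have Gb: "0 \<le> G t" "G t \<le> 1" for t
    using D real_distribution.cdf_bounded_prob[OF D(1)] finite_borel_measure.cdf_nonneg[of D]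
      real_distribution.finite_borel_measure_M[OF D(1)] by auto
  have n1: "n \<ge> 1" using n by simp
  have F1: "joint_cdf M n X (\<lambda>_. x) = gen_ext \<phi>1 (\<Sum>i<n. pinv \<phi>1 (G (lam * x) powr \<alpha> i))" for x
    using Xcdf by (simp add: arch_copula_def)
  have F2: "joint_cdf Ms n Xs (\<lambda>_. x) = gen_ext \<phi>2 (\<Sum>i<n. pinv \<phi>2 (G (lam * x) powr \<alpha>s i))" for x
    using Xscdf by (simp add: arch_copula_def)
  have P1: "measure M {\<omega> \<in> space M. max_stat n (X \<omega>) > x} = 1 - joint_cdf M n X (\<lambda>_. x)" for x
    by (rule prob_max[OF M Xrv n1])
  have P2: "measure Ms {\<omega> \<in> space Ms. max_stat n (Xs \<omega>) > x} = 1 - joint_cdf Ms n Xs (\<lambda>_. x)" for x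
    by (rule prob_max[OF Ms Xsrv n1])
  show ?thesis
  proof (intro conjI impI)
    assume H: "(log_convex_on {0..} \<phi>1 \<or> log_convex_on {0..} \<phi>2) \<and>
      super_additive (pinv \<phi>2 \<circ> \<phi>1) \<and>
      (\<forall>j<n. (\<Sum>i=j..<n. ord_stat n \<alpha>s i) \<le> (\<Sum>i=j..<n. ord_stat n \<alpha> i))"
    show "st_le Ms (\<lambda>\<omega>. max_stat n (Xs \<omega>)) M (\<lambda>\<omega>. max_stat n (X \<omega>))"
      unfolding st_le_def
    proof
      fix x
      have "gen_ext \<phi>1 (\<Sum>i<n. pinv \<phi>1 (G (lam * x) powr \<alpha> i)) \<le> gen_ext \<phi>2 (\<Sum>i<n. pinv \<phi>2 (G (lam * x) powr \<alpha>s i))"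
        using val_i[OF gen1 gen2 n _ _ alpha_pos alphas_pos _ Gb] H by blast
      then show "measure Ms {\<omega> \<in> space Ms. max_stat n (Xs \<omega>) > x} \<le> measure M {\<omega> \<in> space M. max_stat n (X \<omega>) > x}"
        unfolding P1 P2 F1 F2 by simp
    qed
  next
    assume H: "(log_concave_on {0..} \<phi>1 \<or> log_concave_on {0..} \<phi>2) \<and>
      super_additive (pinv \<phi>1 \<circ> \<phi>2) \<and>
      (\<forall>j<n. (\<Sum>i<Suc j. ord_stat n \<alpha>s i) \<ge> (\<Sum>i<Suc j. ord_stat n \<alpha> i))"
    show "st_le M (\<lambda>\<omega>. max_stat n (X \<omega>)) Ms (\<lambda>\<omega>. max_stat n (Xs \<omega>))"
      unfolding st_le_def
    proof
      fix x
      have "gen_ext \<phi>2 (\<Sum>i<n. pinv \<phi>2 (G (lam * x) powr \<alpha>s i)) \<le> gen_ext \<phi>1 (\<Sum>i<n. pinv \<phi>1 (G (lam * x) powr \<alpha> i))"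
        using val_ii[OF gen1 gen2 n _ _ alpha_pos alphas_pos _ Gb] H by blast
      then show "measure M {\<omega> \<in> space M. max_stat n (X \<omega>) > x} \<le> measure Ms {\<omega> \<in> space Ms. max_stat n (Xs \<omega>) > x}"
        unfolding P1 P2 F1 F2 by simp
    qed
  qed
qed

end
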